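(* For every reduced strategy $\sigma\in\mathcal S$, $$\sum_{a\in\mathcal A(\sigma)}\frac{1}{\beta(a)}=1.$$
   Context: Game tree: $V$ is the node set of a finite rooted tree with root $r$ and leaf set $L$; $C(v)$ denotes the set of children of $v$ and $p(v)$ the parent of $v\ne r$. The internal nodes are partitioned into infosets $N$ and actions $\mathcal A$ with $r\in N$, $C(v)\subseteq\mathcal A$ and $|C(v)|>1$ for $v\in N$, and $C(a)\subseteq N\cup L$ for $a\in\mathcal A$. A strategy is $\sigma:N\to V$ with $\sigma(v)\in C(v)$. For a strategy $\sigma$, $V(\sigma)$ is the smallest subset of $V$ containing $r$, containing $\sigma(v)$ for each $v\in N\cap V(\sigma)$, and containing $C(a)$ for each $a\in\mathcal A\cap V(\sigma)$; the reduced strategy is its restriction to $N\cap V(\sigma)$; $\mathcal S$ is the set of reduced strategies and $\mathcal A(\sigma):=\mathcal A\cap V(\sigma)$. Define $m:N\cup\mathcal A\to\mathbb N$ recursively from the bottom by $m(a)=1+\sum_{v\in C(a)\cap N}m(v)$ for $a\in\mathcal A$ and $m(v)=\sum_{a\in C(v)}m(a)$ for $v\in N$. Define $\beta:N\cup\mathcal A\to\mathbb R$ from the top by $\beta(r)=1$, $\beta(a)=m(a)\beta(p(a))$ for $a\in\mathcal A$, and $\beta(v)=\beta(p(v))/m(v)$ for $v\in N\setminus\{r\}$. *)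

theory Defs
  imports Main "HOL.Real"
begin

definition children :: "'v set \<Rightarrow> 'v \<Rightarrow> ('v \<Rightarrow> 'v) \<Rightarrow> 'v \<Rightarrow> 'v set" where
  "children V r par v = {w \<in> V. w \<noteq> r \<and> par w = v}"

definition leaves :: "'v set \<Rightarrow> 'v \<Rightarrow> ('v \<Rightarrow> 'v) \<Rightarrow> 'v set" where
  "leaves V r par = {v \<in> V. children V r par v = {}}"

definition rooted_tree :: "'v set \<Rightarrow> 'v \<Rightarrow> ('v \<Rightarrow> 'v) \<Rightarrow> bool" where
  "rooted_tree V r par \<longleftrightarrow> finite V \<and> r \<in> V \<and>
     (\<forall>v \<in> V - {r}. par v \<in> V) \<and> (\<forall>v \<in> V. \<exists>n. (par ^^ n) v = r)"

definition game_tree :: "'v set \<Rightarrow> 'v \<Rightarrow> ('v \<Rightarrow> 'v) \<Rightarrow> 'v set \<Rightarrow> 'v set \<Rightarrow> bool" where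
  "game_tree V r par N Act \<longleftrightarrow> rooted_tree V r par \<and>
     N \<union> Act = V - leaves V r par \<and> N \<inter> Act = {} \<and> r \<in> N \<and>
     (\<forall>v \<in> N. children V r par v \<subseteq> Act \<and> card (children V r par v) > 1) \<and>
     (\<forall>a \<in> Act. children V r par a \<subseteq> N \<union> leaves V r par)"

definition is_strategy :: "'v set \<Rightarrow> 'v \<Rightarrow> ('v \<Rightarrow> 'v) \<Rightarrow> 'v set \<Rightarrow> ('v \<Rightarrow> 'v) \<Rightarrow> bool" where
  "is_strategy V r par N \<sigma> \<longleftrightarrow> (\<forall>v \<in> N. \<sigma> v \<in> children V r par v)"

inductive_set strat_nodes :: "'v set \<Rightarrow> 'v \<Rightarrow> ('v \<Rightarrow> 'v) \<Rightarrow> 'v set \<Rightarrow> 'v set \<Rightarrow> ('v \<Rightarrow> 'v) \<Rightarrow> 'v set"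
  for V r par N Act \<sigma> where
  root: "r \<in> strat_nodes V r par N Act \<sigma>"
| choose: "v \<in> strat_nodes V r par N Act \<sigma> \<Longrightarrow> v \<in> N \<Longrightarrow> \<sigma> v \<in> strat_nodes V r par N Act \<sigma>"
| act: "a \<in> strat_nodes V r par N Act \<sigma> \<Longrightarrow> a \<in> Act \<Longrightarrow> w \<in> children V r par a
          \<Longrightarrow> w \<in> strat_nodes V r par N Act \<sigma>"

text \<open>m, defined bottom-up; implemented with fuel (card V exceeds the height).\<close>
fun m_fuel :: "'v set \<Rightarrow> 'v \<Rightarrow> ('v \<Rightarrow> 'v) \<Rightarrow> 'v set \<Rightarrow> 'v set \<Rightarrow> nat \<Rightarrow> 'v \<Rightarrow> nat" where
  "m_fuel V r par N Act 0 v = 0"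
| "m_fuel V r par N Act (Suc k) v =
     (if v \<in> Act then 1 + (\<Sum>w \<in> children V r par v \<inter> N. m_fuel V r par N Act k w)
      else if v \<in> N then (\<Sum>a \<in> children V r par v. m_fuel V r par N Act k a)
      else 0)"

definition mval :: "'v set \<Rightarrow> 'v \<Rightarrow> ('v \<Rightarrow> 'v) \<Rightarrow> 'v set \<Rightarrow> 'v set \<Rightarrow> 'v \<Rightarrow> nat" where
  "mval V r par N Act v = m_fuel V r par N Act (card V) v"

text \<open>beta, defined top-down; implemented with fuel (card V exceeds the depth).\<close>
fun beta_fuel :: "'v set \<Rightarrow> 'v \<Rightarrow> ('v \<Rightarrow> 'v) \<Rightarrow> 'v set \<Rightarrow> 'v set \<Rightarrow> nat \<Rightarrow> 'v \<Rightarrow> real" where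
  "beta_fuel V r par N Act 0 v = 1"
| "beta_fuel V r par N Act (Suc k) v =
     (if v = r then 1
      else if v \<in> Act then real (mval V r par N Act v) * beta_fuel V r par N Act k (par v)
      else beta_fuel V r par N Act k (par v) / real (mval V r par N Act v))"

definition beta :: "'v set \<Rightarrow> 'v \<Rightarrow> ('v \<Rightarrow> 'v) \<Rightarrow> 'v set \<Rightarrow> 'v set \<Rightarrow> 'v \<Rightarrow> real" where
  "beta V r par N Act v = beta_fuel V r par N Act (card V) v"

end

theory Submission
  imports Defs
begin

locale gt =
  fixes V N Act :: "'v set" and r :: 'v and par :: "'v \<Rightarrow> 'v"
  assumes gt: "game_tree V r par N Act"
begin

abbreviation "C \<equiv> children V r par"
abbreviation "M \<equiv> mval V r par N Act"
abbreviation "B \<equiv> beta V r par N Act"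

lemma finV: "finite V" and rV: "r \<in> V" and parV: "\<And>v. v \<in> V \<Longrightarrow> v \<noteq> r \<Longrightarrow> par v \<in> V"
  and reach: "\<And>v. v \<in> V \<Longrightarrow> \<exists>n. (par ^^ n) v = r"
  using gt unfolding game_tree_def rooted_tree_def by auto

lemma NA: "N \<union> Act = V - leaves V r par" "N \<inter> Act = {}" "r \<in> N"
  and NC: "\<And>v. v \<in> N \<Longrightarrow> C v \<subseteq> Act \<and> card (C v) > 1"
  and AC: "\<And>a. a \<in> Act \<Longrightarrow> C a \<subseteq> N \<union> leaves V r par"
  using gt unfolding game_tree_def by auto

lemma ActV: "a \<in> Act \<Longrightarrow> a \<in> V" and NV: "v \<in> N \<Longrightarrow> v \<in> V"
  using NA(1) by auto

lemma CV: "w \<in> C v \<Longrightarrow> w \<in> V \<and> w \<noteq> r \<and> par w = v"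
  unfolding children_def by auto

lemma leafnot: "w \<in> leaves V r par \<Longrightarrow> w \<notin> N \<and> w \<notin> Act"
  using NA(1) by auto

definition depth where "depth v = (LEAST n. (par ^^ n) v = r)"

lemma depth_r: "depth r = 0"
  unfolding depth_def by simp

lemma depth_par: assumes "v \<in> V" "v \<noteq> r" shows "depth v = Suc (depth (par v))"
proof -
  obtain n where n: "(par ^^ n) v = r" using reach assms(1) by blast
  have d: "(par ^^ depth v) v = r" unfolding depth_def using n by (rule LeastI)
  have "depth v \<noteq> 0" using d assms(2) by (cases "depth v") auto
  then obtain k where k: "depth v = Suc k" by (cases "depth v") auto
  have "(par ^^ k) (par v) = r" using d k by (simp add: funpow_Suc_right del: funpow.simps)
  hence le1: "depth (par v) \<le> k" unfolding depth_def by (rule Least_le)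
  have dp: "(par ^^ depth (par v)) (par v) = r" unfolding depth_def
    using \<open>(par ^^ k) (par v) = r\<close> by (rule LeastI)
  hence "(par ^^ Suc (depth (par v))) v = r" by (simp add: funpow_Suc_right del: funpow.simps)
  hence "depth v \<le> Suc (depth (par v))" unfolding depth_def by (rule Least_le)
  thus ?thesis using le1 k by simp
qed

lemma depth_lt: assumes "v \<in> V" shows "depth v < card V"
proof -
  obtain n0 where n0: "(par ^^ n0) v = r" using reach assms by blast
  define n where "n = depth v"
  have d: "(par ^^ n) v = r" unfolding n_def depth_def using n0 by (rule LeastI)
  have mn: "\<And>j. j < n \<Longrightarrow> (par ^^ j) v \<noteq> r"
    using not_less_Least unfolding n_def depth_def by blast
  have inV: "\<And>i. i \<le> n \<Longrightarrow> (par ^^ i) v \<in> V"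
  proof -
    fix i show "i \<le> n \<Longrightarrow> (par ^^ i) v \<in> V"
    proof (induction i)
      case 0 thus ?case using assms by simp
    next
      case (Suc i)
      hence "(par ^^ i) v \<in> V" "(par ^^ i) v \<noteq> r" using mn by auto
      thus ?case using parV by simp
    qed
  qed
  have inj: "inj_on (\<lambda>i. (par ^^ i) v) {0..n}"
  proof (rule inj_onI, rule ccontr)
    fix i j assume ij: "i \<in> {0..n}" "j \<in> {0..n}" "(par ^^ i) v = (par ^^ j) v" "i \<noteq> j"
    { fix i j assume ij: "i \<le> n" "j \<le> n" "(par ^^ i) v = (par ^^ j) v" "i < j"
      have "(par ^^ (n - j + i)) v = (par ^^ (n - j)) ((par ^^ i) v)" by (simp add: funpow_add)
      also have "\<dots> = (par ^^ (n - j)) ((par ^^ j) v)" using ij by simp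
      also have "\<dots> = (par ^^ (n - j + j)) v" by (simp only: funpow_add comp_def)
      also have "\<dots> = (par ^^ n) v" using ij by simp
      finally have "(par ^^ (n - j + i)) v = r" using d by simp
      moreover have "n - j + i < n" using ij by simp
      ultimately have False using mn by blast }
    thus False using ij by (metis atLeastAtMost_iff linorder_neqE_nat)
  qed
  have "card ((\<lambda>i. (par ^^ i) v) ` {0..n}) = n + 1" using card_image[OF inj] by simp
  moreover have "(\<lambda>i. (par ^^ i) v) ` {0..n} \<subseteq> V" using inV by auto
  ultimately have "n + 1 \<le> card V" using card_mono finV by metis
  thus ?thesis unfolding n_def by simp
qed

lemma child_depth: "w \<in> C v \<Longrightarrow> depth w = Suc (depth v)"
  using CV depth_par by metis

lemma m_stable: "v \<in> V \<Longrightarrow> card V \<le> k + depth v \<Longrightarrow> card V \<le> k' + depth v \<Longrightarrow>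
   m_fuel V r par N Act k v = m_fuel V r par N Act k' v"
proof (induction k arbitrary: v k')
  case 0 thus ?case using depth_lt by fastforce
next
  case (Suc k)
  have "k' \<noteq> 0" using Suc.prems depth_lt by fastforce
  then obtain k1 where k1: "k' = Suc k1" by (cases k') auto
  have eq: "\<And>w. w \<in> C v \<Longrightarrow> m_fuel V r par N Act k w = m_fuel V r par N Act k1 w"
  proof -
    fix w assume w: "w \<in> C v"
    show "m_fuel V r par N Act k w = m_fuel V r par N Act k1 w"
      apply (rule Suc.IH)
      using w CV child_depth Suc.prems k1 by auto
  qed
  have e1: "(\<Sum>w \<in> C v \<inter> N. m_fuel V r par N Act k w) = (\<Sum>w \<in> C v \<inter> N. m_fuel V r par N Act k1 w)"
    using eq by (intro sum.cong) auto
  have e2: "(\<Sum>w \<in> C v. m_fuel V r par N Act k w) = (\<Sum>w \<in> C v. m_fuel V r par N Act k1 w)"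
    using eq by (intro sum.cong) auto
  show ?case unfolding k1 using e1 e2 by (simp only: m_fuel.simps(2))
qed

lemma cardpos: "card V = Suc (card V - 1)"
proof -
  have "card V > 0" using finV rV card_gt_0_iff by blast
  thus ?thesis by simp
qed

lemma mval_act: assumes "a \<in> Act" shows "M a = 1 + (\<Sum>w \<in> C a \<inter> N. M w)"
proof -
  have "M a = m_fuel V r par N Act (Suc (card V - 1)) a" unfolding mval_def using cardpos by simp
  also have "\<dots> = 1 + (\<Sum>w \<in> C a \<inter> N. m_fuel V r par N Act (card V - 1) w)" using assms by simp
  also have "\<dots> = 1 + (\<Sum>w \<in> C a \<inter> N. M w)"
    unfolding mval_def
    apply (rule arg_cong[where f="\<lambda>x. 1 + x"], rule sum.cong, simp)
    apply (rule m_stable) using CV child_depth by auto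
  finally show ?thesis .
qed

lemma mval_N: assumes "v \<in> N" shows "M v = (\<Sum>w \<in> C v. M w)"
proof -
  have na: "v \<notin> Act" using assms NA(2) by auto
  have "M v = m_fuel V r par N Act (Suc (card V - 1)) v" unfolding mval_def using cardpos by simp
  also have "\<dots> = (\<Sum>w \<in> C v. m_fuel V r par N Act (card V - 1) w)" using assms na by simp
  also have "\<dots> = (\<Sum>w \<in> C v. M w)"
    unfolding mval_def
    apply (rule sum.cong, simp)
    apply (rule m_stable) using CV child_depth by auto
  finally show ?thesis .
qed

lemma beta_stable: "v \<in> V \<Longrightarrow> depth v < k \<Longrightarrow> depth v < k' \<Longrightarrow>
   beta_fuel V r par N Act k v = beta_fuel V r par N Act k' v"
proof (induction k arbitrary: v k')
  case 0 thus ?case by simp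
next
  case (Suc k)
  then obtain k1 where k1: "k' = Suc k1" by (cases k') auto
  show ?case
  proof (cases "v = r")
    case True thus ?thesis unfolding k1 by simp
  next
    case False
    have "beta_fuel V r par N Act k (par v) = beta_fuel V r par N Act k1 (par v)"
      apply (rule Suc.IH) using parV depth_par Suc.prems k1 False by auto
    thus ?thesis unfolding k1 by simp
  qed
qed

lemma beta_root: "B r = 1"
proof -
  obtain K where "card V = Suc K" using cardpos by blast
  thus ?thesis unfolding beta_def by simp
qed

lemma beta_nonroot: assumes "v \<in> V" "v \<noteq> r"
  shows "B v = (if v \<in> Act then real (M v) * B (par v) else B (par v) / real (M v))"
proof -
  have e: "beta_fuel V r par N Act (card V - 1) (par v) = B (par v)"
    unfolding beta_def apply (rule beta_stable)
    using assms parV depth_par[OF assms] depth_lt[OF assms(1)] by auto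
  obtain K where K: "card V = Suc K" using cardpos by blast
  have "B v = beta_fuel V r par N Act (Suc K) v" unfolding beta_def using K by simp
  thus ?thesis using assms e K by simp
qed

lemma actpos: "a \<in> Act \<Longrightarrow> M a \<noteq> 0"
  using mval_act by simp

lemma key: assumes "a \<in> Act"
  shows "1 / B a = 1 / B (par a) - (\<Sum>w \<in> C a \<inter> N. 1 / B w)"
proof -
  have aV: "a \<in> V" and ar: "a \<noteq> r" using assms ActV NA by auto
  have ba: "B a = real (M a) * B (par a)" using beta_nonroot[OF aV ar] assms by simp
  have "(\<Sum>w \<in> C a \<inter> N. 1 / B w) = (\<Sum>w \<in> C a \<inter> N. real (M w) / B a)"
  proof (rule sum.cong, simp)
    fix w assume w: "w \<in> C a \<inter> N"
    have "w \<in> V" "w \<noteq> r" "par w = a" "w \<notin> Act" using w CV NA by auto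
    hence "B w = B a / real (M w)" using beta_nonroot by simp
    thus "1 / B w = real (M w) / B a" by simp
  qed
  also have "\<dots> = (\<Sum>w \<in> C a \<inter> N. real (M w)) / B a" by (simp add: sum_divide_distrib)
  also have "\<dots> = (real (M a) - 1) / B a" using mval_act[OF assms] by simp
  finally have s: "(\<Sum>w \<in> C a \<inter> N. 1 / B w) = (real (M a) - 1) / B a" .
  have m: "real (M a) \<noteq> 0" using actpos assms by simp
  have "1 / B (par a) = real (M a) / B a" using ba m by simp
  thus ?thesis using s by (simp add: diff_divide_distrib)
qed


context
  fixes \<sigma> :: "'v \<Rightarrow> 'v"
  assumes strat: "is_strategy V r par N \<sigma>"
begin

abbreviation "S \<equiv> strat_nodes V r par N Act \<sigma>"

lemma sig: "v \<in> N \<Longrightarrow> \<sigma> v \<in> C v"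
  using strat unfolding is_strategy_def by auto

lemma SV: "x \<in> S \<Longrightarrow> x \<in> V"
  by (induction rule: strat_nodes.induct) (use rV sig CV in auto)

lemma act_inv: assumes "a \<in> S" "a \<in> Act" shows "par a \<in> N \<and> par a \<in> S \<and> \<sigma> (par a) = a"
  using assms(1)
proof cases
  case root thus ?thesis using assms NA by auto
next
  case (choose v) thus ?thesis using sig CV by metis
next
  case (act b) thus ?thesis using AC assms(2) leafnot NA(2) by blast
qed

lemma N_inv: assumes "v \<in> S" "v \<in> N" "v \<noteq> r" shows "par v \<in> Act \<and> par v \<in> S \<and> v \<in> C (par v)"
  using assms(1)
proof cases
  case root thus ?thesis using assms by auto
next
  case (choose u) thus ?thesis using sig NC assms(2) NA(2) by blast
next
  case (act b) thus ?thesis using CV by metis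
qed

lemma finS: "finite S"
  using SV finV by (meson finite_subset subsetI)

lemma main: "(\<Sum>a \<in> Act \<inter> S. 1 / B a) = 1"
proof -
  define f where "f = (\<lambda>v. 1 / B v)"
  have fin: "finite (Act \<inter> S)" "finite (N \<inter> S)" using finS by auto
  have "(\<Sum>a \<in> Act \<inter> S. 1 / B a) = (\<Sum>a \<in> Act \<inter> S. f (par a) - (\<Sum>w \<in> C a \<inter> N. f w))"
    unfolding f_def using key by (intro sum.cong) auto
  also have e1: "\<dots> = (\<Sum>a \<in> Act \<inter> S. f (par a)) - (\<Sum>a \<in> Act \<inter> S. \<Sum>w \<in> C a \<inter> N. f w)"
    by (rule sum_subtractf)
  finally have e0: "(\<Sum>a \<in> Act \<inter> S. 1 / B a) = (\<Sum>a \<in> Act \<inter> S. f (par a)) - (\<Sum>a \<in> Act \<inter> S. \<Sum>w \<in> C a \<inter> N. f w)" .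
  have e2: "(\<Sum>a \<in> Act \<inter> S. f (par a)) = (\<Sum>v \<in> N \<inter> S. f v)"
  proof -
    have inj: "inj_on par (Act \<inter> S)"
    proof (rule inj_onI)
      fix a b assume ab: "a \<in> Act \<inter> S" "b \<in> Act \<inter> S" "par a = par b"
      have "a \<in> S" "a \<in> Act" "b \<in> S" "b \<in> Act" using ab(1,2) by auto
      hence "\<sigma> (par a) = a" "\<sigma> (par b) = b" using act_inv by auto
      thus "a = b" using ab(3) by metis
    qed
    have img: "par ` (Act \<inter> S) = N \<inter> S"
    proof
      show "par ` (Act \<inter> S) \<subseteq> N \<inter> S"
      proof
        fix x assume "x \<in> par ` (Act \<inter> S)"
        then obtain a where a: "a \<in> Act" "a \<in> S" "x = par a" by blast
        show "x \<in> N \<inter> S" using act_inv[OF a(2) a(1)] a(3) by simp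
      qed
      show "N \<inter> S \<subseteq> par ` (Act \<inter> S)"
      proof
        fix v assume v: "v \<in> N \<inter> S"
        have sv: "\<sigma> v \<in> C v" using sig v by auto
        hence "par (\<sigma> v) = v" using CV[OF sv] by simp
        moreover have "\<sigma> v \<in> Act" using NC[of v] v sv by auto
        moreover have "\<sigma> v \<in> S" using strat_nodes.choose[of v] v by blast
        ultimately show "v \<in> par ` (Act \<inter> S)" by force
      qed
    qed
    have "(\<Sum>v \<in> N \<inter> S. f v) = (\<Sum>v \<in> par ` (Act \<inter> S). f v)" unfolding img ..
    also have "\<dots> = (\<Sum>a \<in> Act \<inter> S. f (par a))" using sum.reindex[OF inj, of f] by simp
    finally show ?thesis by simp
  qed
  have e3: "(\<Sum>a \<in> Act \<inter> S. \<Sum>w \<in> C a \<inter> N. f w) = sum f (\<Union>a \<in> Act \<inter> S. C a \<inter> N)"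
  proof (rule sum.UNION_disjoint[symmetric])
    show "finite (Act \<inter> S)" using fin by simp
    show "\<forall>i\<in>Act \<inter> S. finite (C i \<inter> N)"
    proof
      fix i :: 'v show "finite (C i \<inter> N)" using finV unfolding children_def by simp
    qed
    show "\<forall>i\<in>Act \<inter> S. \<forall>j\<in>Act \<inter> S. i \<noteq> j \<longrightarrow> C i \<inter> N \<inter> (C j \<inter> N) = {}"
    proof (intro ballI impI)
      fix i j :: 'v assume "i \<noteq> j"
      thus "C i \<inter> N \<inter> (C j \<inter> N) = {}" unfolding children_def by auto
    qed
  qed
  have e4: "(\<Union>a \<in> Act \<inter> S. C a \<inter> N) = N \<inter> S - {r}"
  proof
    show "(\<Union>a \<in> Act \<inter> S. C a \<inter> N) \<subseteq> N \<inter> S - {r}"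
    proof
      fix x assume "x \<in> (\<Union>a \<in> Act \<inter> S. C a \<inter> N)"
      then obtain a where a: "a \<in> Act" "a \<in> S" "x \<in> C a" "x \<in> N" by blast
      have "x \<in> S" using strat_nodes.act[OF a(2) a(1) a(3)] .
      thus "x \<in> N \<inter> S - {r}" using a CV by auto
    qed
    show "N \<inter> S - {r} \<subseteq> (\<Union>a \<in> Act \<inter> S. C a \<inter> N)"
    proof
      fix x assume x: "x \<in> N \<inter> S - {r}"
      hence "par x \<in> Act \<inter> S" "x \<in> C (par x) \<inter> N" using N_inv by auto
      thus "x \<in> (\<Union>a \<in> Act \<inter> S. C a \<inter> N)" by blast
    qed
  qed
  have e5: "(\<Sum>v \<in> N \<inter> S. f v) = f r + sum f (N \<inter> S - {r})"
  proof -
    have "r \<in> N \<inter> S" using NA(3) strat_nodes.root[where V=V and r=r and par=par and N=N and Act=Act and \<sigma>=\<sigma>] by blast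
    thus ?thesis using sum.remove[OF fin(2), of r f] by simp
  qed
  show ?thesis unfolding e0 e2 e3 e4 e5 unfolding f_def using beta_root by simp
qed

end
end

lemma gt_intro: "game_tree V r par N Act \<Longrightarrow> gt V N Act r par"
  by (simp add: gt_def)

theorem mainTheorem4:
  fixes V N Act :: "'v set" and r :: 'v and par \<sigma> :: "'v \<Rightarrow> 'v"
  assumes "game_tree V r par N Act"
    and "is_strategy V r par N \<sigma>"
  shows "(\<Sum>a \<in> Act \<inter> strat_nodes V r par N Act \<sigma>. 1 / beta V r par N Act a) = 1"
proof -
  interpret gt V N Act r par using assms(1) by (rule gt_intro)
  show ?thesis using main[OF assms(2)] .
qed

end
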